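(* The following cut rules are admissible in $\mathsf{G}(\mathbf{KT}^+_D)$: (Cut$_1$) if $\vdash\emptyset\mid\Gamma\Rightarrow\Delta,\lambda$ and $\vdash\emptyset\mid\lambda,\Gamma'\Rightarrow\Delta'$ then $\vdash\emptyset\mid\Gamma,\Gamma'\Rightarrow\Delta,\Delta'$; (Cut$_2$) if $\vdash\Sigma\mid\Gamma\Rightarrow\Delta,D_G\lambda$ and $\vdash D_G\lambda,\Sigma'\mid\Gamma'\Rightarrow\Delta'$ then $\vdash\Sigma',\Sigma\mid\Gamma,\Gamma'\Rightarrow\Delta,\Delta'$. Here $\Gamma,\Gamma',\Delta,\Delta'$ are arbitrary finite multisets of formulas, $\Sigma,\Sigma'$ finite multisets of outmost-boxed formulas, $\lambda$ a formula and $G\in\mathsf{Grp}$.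
   Context: Language: fix a finite nonempty set $\mathsf{Agt}$ of agents and a countable set $\mathsf{Prop}$ of propositional variables; $\mathsf{Grp}$ is the set of nonempty subsets of $\mathsf{Agt}$. Formulas: $\alpha::=p\mid\bot\mid\alpha\wedge\alpha\mid\alpha\vee\alpha\mid\alpha\rightarrow\alpha\mid\neg\alpha\mid D_G\alpha$ ($p\in\mathsf{Prop}$, $G\in\mathsf{Grp}$). Outmost-boxed formula: one of the form $D_G\gamma$. Calculus $\mathsf{G}(\mathbf{KT}^+_D)$ ($\vdash$ denotes derivability in it, i.e. being the root of a finite tree built from initial sequents by the rules): a T-sequent $\Sigma\mid\Gamma\Rightarrow\Delta$ consists of finite multisets $\Gamma,\Delta$ of formulas and a finite multiset $\Sigma$ of outmost-boxed formulas. Initial sequents: $\Sigma\mid\Gamma,p\Rightarrow p,\Delta$ ($p\in\mathsf{Prop}$) and $\Sigma\mid\bot,\Gamma\Rightarrow\Delta$. Propositional rules (with $\Sigma$ unchanged): $(R\wedge)$ from $\Sigma\mid\Gamma\Rightarrow\Delta,\alpha_1$ and $\Sigma\mid\Gamma\Rightarrow\Delta,\alpha_2$ infer $\Sigma\mid\Gamma\Rightarrow\Delta,\alpha_1\wedge\alpha_2$; $(L\wedge)$ from $\Sigma\mid\alpha_1,\alpha_2,\Gamma\Rightarrow\Delta$ infer $\Sigma\mid\alpha_1\wedge\alpha_2,\Gamma\Rightarrow\Delta$; $(R\vee)$ from $\Sigma\mid\Gamma\Rightarrow\Delta,\alpha_1,\alpha_2$ infer $\Sigma\mid\Gamma\Rightarrow\Delta,\alpha_1\vee\alpha_2$;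 $(L\vee)$ from $\Sigma\mid\alpha_1,\Gamma\Rightarrow\Delta$ and $\Sigma\mid\alpha_2,\Gamma\Rightarrow\Delta$ infer $\Sigma\mid\alpha_1\vee\alpha_2,\Gamma\Rightarrow\Delta$; $(R\rightarrow)$ from $\Sigma\mid\alpha_1,\Gamma\Rightarrow\Delta,\alpha_2$ infer $\Sigma\mid\Gamma\Rightarrow\Delta,\alpha_1\rightarrow\alpha_2$; $(L\rightarrow)$ from $\Sigma\mid\Gamma\Rightarrow\Delta,\alpha_1$ and $\Sigma\mid\alpha_2,\Gamma\Rightarrow\Delta$ infer $\Sigma\mid\alpha_1\rightarrow\alpha_2,\Gamma\Rightarrow\Delta$; $(R\neg)$ from $\Sigma\mid\alpha,\Gamma\Rightarrow\Delta$ infer $\Sigma\mid\Gamma\Rightarrow\Delta,\neg\alpha$; $(L\neg)$ from $\Sigma\mid\Gamma\Rightarrow\Delta,\alpha$ infer $\Sigma\mid\neg\alpha,\Gamma\Rightarrow\Delta$. Modal rules: $(D_K^+)$: from $\emptyset\mid\alpha_1,\dots,\alpha_n\Rightarrow\beta$ ($n\ge0$) infer $\Sigma,D_{G_1}\alpha_1,\dots,D_{G_n}\alpha_n\mid\Pi\Rightarrow D_G\beta,\Omega$, provided $G_i\subseteq G$ for all $i$, $\Sigma$ consists only of formulas $D_H\gamma$ with $H\not\subseteq G$, $\Pi$ only of propositional variables and $\bot$, and $\Omega$ only of propositional variables, $\bot$ and outmost-boxed formulas; $(D_T^+)$: from $D_G\alpha,\Sigma\mid\Gamma,\alpha\Rightarrow\Delta$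 infer $\Sigma\mid\Gamma,D_G\alpha\Rightarrow\Delta$. *)

theory Defs
  imports Main "HOL-Library.Multiset" "HOL-Library.Countable"
begin

text \<open>Formulas over agents of type 'a (the finite nonempty set Agt is the
universe of the type 'a::finite) and propositional variables of type 'p.\<close>

datatype ('a, 'p) fm =
    Atom 'p
  | Bot
  | And "('a, 'p) fm" "('a, 'p) fm"
  | Or "('a, 'p) fm" "('a, 'p) fm"
  | Imp "('a, 'p) fm" "('a, 'p) fm"
  | Neg "('a, 'p) fm"
  | Box "'a set" "('a, 'p) fm"

text \<open>Well-formedness: every group index G is a nonempty subset of Agt (G in Grp).\<close>
fun wf :: "('a, 'p) fm \<Rightarrow> bool" where
  "wf (Atom p) = True"
| "wf Bot = True"
| "wf (And a b) = (wf a \<and> wf b)"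
| "wf (Or a b) = (wf a \<and> wf b)"
| "wf (Imp a b) = (wf a \<and> wf b)"
| "wf (Neg a) = wf a"
| "wf (Box G a) = (G \<noteq> {} \<and> wf a)"

definition wf_ms :: "('a, 'p) fm multiset \<Rightarrow> bool" where
  "wf_ms M = (\<forall>x\<in>#M. wf x)"

fun boxed :: "('a, 'p) fm \<Rightarrow> bool" where
  "boxed (Box G a) = True"
| "boxed _ = False"

definition boxed_ms :: "('a, 'p) fm multiset \<Rightarrow> bool" where
  "boxed_ms M = (\<forall>x\<in>#M. boxed x)"

fun atom_or_bot :: "('a, 'p) fm \<Rightarrow> bool" where
  "atom_or_bot (Atom p) = True"
| "atom_or_bot Bot = True"
| "atom_or_bot _ = False"

text \<open>Derivability in G(KT+_D): derivable S Gam Del means |- S | Gam => Del.\<close>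
inductive derivable :: "('a, 'p) fm multiset \<Rightarrow> ('a, 'p) fm multiset \<Rightarrow> ('a, 'p) fm multiset \<Rightarrow> bool" where
  init_atom: "boxed_ms S \<Longrightarrow> derivable S (add_mset (Atom p) Gam) (add_mset (Atom p) Del)"
| init_bot: "boxed_ms S \<Longrightarrow> derivable S (add_mset Bot Gam) Del"
| R_and: "derivable S Gam (add_mset a1 Del) \<Longrightarrow> derivable S Gam (add_mset a2 Del) \<Longrightarrow>
          derivable S Gam (add_mset (And a1 a2) Del)"
| L_and: "derivable S (add_mset a1 (add_mset a2 Gam)) Del \<Longrightarrow>
          derivable S (add_mset (And a1 a2) Gam) Del"
| R_or: "derivable S Gam (add_mset a1 (add_mset a2 Del)) \<Longrightarrow>
          derivable S Gam (add_mset (Or a1 a2) Del)"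
| L_or: "derivable S (add_mset a1 Gam) Del \<Longrightarrow> derivable S (add_mset a2 Gam) Del \<Longrightarrow>
          derivable S (add_mset (Or a1 a2) Gam) Del"
| R_imp: "derivable S (add_mset a1 Gam) (add_mset a2 Del) \<Longrightarrow>
          derivable S Gam (add_mset (Imp a1 a2) Del)"
| L_imp: "derivable S Gam (add_mset a1 Del) \<Longrightarrow> derivable S (add_mset a2 Gam) Del \<Longrightarrow>
          derivable S (add_mset (Imp a1 a2) Gam) Del"
| R_neg: "derivable S (add_mset a Gam) Del \<Longrightarrow> derivable S Gam (add_mset (Neg a) Del)"
| L_neg: "derivable S Gam (add_mset a Del) \<Longrightarrow> derivable S (add_mset (Neg a) Gam) Del"
| D_K: "derivable {#} (image_mset snd Ps) {#b#} \<Longrightarrow>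
        (\<forall>(H, a)\<in>set_mset Ps. H \<subseteq> G) \<Longrightarrow>
        (\<forall>x\<in>#S. \<exists>H c. x = Box H c \<and> \<not> H \<subseteq> G) \<Longrightarrow>
        (\<forall>x\<in>#Pi. atom_or_bot x) \<Longrightarrow>
        (\<forall>x\<in>#Om. atom_or_bot x \<or> boxed x) \<Longrightarrow>
        derivable (S + image_mset (\<lambda>(H, a). Box H a) Ps) Pi (add_mset (Box G b) Om)"
| D_T: "derivable (add_mset (Box G a) S) (add_mset a Gam) Del \<Longrightarrow>
        derivable S (add_mset (Box G a) Gam) Del"

end

theory Submission
  imports Defs
begin


lemma mset_minus_add_mem[simp]: "x \<in># M \<Longrightarrow> add_mset y M - {#x#} = add_mset y (M - {#x#})"
  by (simp add: multiset_eq_iff)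

lemma derivable_boxed: "derivable S G D \<Longrightarrow> boxed_ms S"
  by (induction rule: derivable.induct) (auto simp: boxed_ms_def)



lemma WL_ab: "derivable S G D \<Longrightarrow> atom_or_bot A \<Longrightarrow> derivable S (add_mset A G) D"
proof (induction rule: derivable.induct)
  case (init_atom S p Gam Del)
  have "derivable S (add_mset (Atom p) (add_mset A Gam)) (add_mset (Atom p) Del)"
    by (rule derivable.init_atom[OF init_atom.hyps])
  then show ?case by (simp add: add_mset_commute)
next
  case (init_bot S Gam Del)
  have "derivable S (add_mset Bot (add_mset A Gam)) Del"
    by (rule derivable.init_bot[OF init_bot.hyps])
  then show ?case by (simp add: add_mset_commute)
next
  case (R_and S Gam a1 Del a2) then show ?case by (simp add: derivable.R_and)
next
  case (L_and S a1 a2 Gam Del)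
  have "derivable S (add_mset a1 (add_mset a2 (add_mset A Gam))) Del"
    using L_and by (simp add: add_mset_commute)
  hence "derivable S (add_mset (And a1 a2) (add_mset A Gam)) Del" by (rule derivable.L_and)
  then show ?case by (simp add: add_mset_commute)
next
  case (R_or S Gam a1 a2 Del) then show ?case by (simp add: derivable.R_or)
next
  case (L_or S a1 Gam Del a2)
  have "derivable S (add_mset a1 (add_mset A Gam)) Del" "derivable S (add_mset a2 (add_mset A Gam)) Del"
    using L_or by (simp_all add: add_mset_commute)
  hence "derivable S (add_mset (Or a1 a2) (add_mset A Gam)) Del" by (rule derivable.L_or)
  then show ?case by (simp add: add_mset_commute)
next
  case (R_imp S a1 Gam a2 Del)
  have "derivable S (add_mset a1 (add_mset A Gam)) (add_mset a2 Del)"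
    using R_imp by (simp add: add_mset_commute)
  then show ?case by (rule derivable.R_imp)
next
  case (L_imp S Gam a1 Del a2)
  have "derivable S (add_mset A Gam) (add_mset a1 Del)" "derivable S (add_mset a2 (add_mset A Gam)) Del"
    using L_imp by (simp_all add: add_mset_commute)
  hence "derivable S (add_mset (Imp a1 a2) (add_mset A Gam)) Del" by (rule derivable.L_imp)
  then show ?case by (simp add: add_mset_commute)
next
  case (R_neg S a Gam Del)
  have "derivable S (add_mset a (add_mset A Gam)) Del"
    using R_neg by (simp add: add_mset_commute)
  then show ?case by (rule derivable.R_neg)
next
  case (L_neg S Gam a Del)
  have "derivable S (add_mset A Gam) (add_mset a Del)"
    using L_neg by (simp add: add_mset_commute)
  hence "derivable S (add_mset (Neg a) (add_mset A Gam)) Del" by (rule derivable.L_neg)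
  then show ?case by (simp add: add_mset_commute)
next
  case (D_K Ps b G S Pi Om) then show ?case by (intro derivable.D_K) auto
next
  case (D_T G a S Gam Del)
  have "derivable (add_mset (Box G a) S) (add_mset a (add_mset A Gam)) Del"
    using D_T by (simp add: add_mset_commute)
  hence "derivable S (add_mset (Box G a) (add_mset A Gam)) Del" by (rule derivable.D_T)
  then show ?case by (simp add: add_mset_commute)
qed



lemma boxed_ms_plus[simp]: "boxed_ms (A + B) = (boxed_ms A \<and> boxed_ms B)"
  by (auto simp: boxed_ms_def)
lemma boxed_ms_add[simp]: "boxed_ms (add_mset x A) = (boxed x \<and> boxed_ms A)"
  by (auto simp: boxed_ms_def)
lemma boxed_ms_empty[simp]: "boxed_ms {#}"
  by (auto simp: boxed_ms_def)

lemma WR_abb: "derivable S G D \<Longrightarrow> atom_or_bot A \<or> boxed A \<Longrightarrow> derivable S G (add_mset A D)"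
proof (induction rule: derivable.induct)
  case (init_atom S p Gam Del)
  have "derivable S (add_mset (Atom p) Gam) (add_mset (Atom p) (add_mset A Del))"
    by (rule derivable.init_atom[OF init_atom.hyps])
  then show ?case by (simp add: add_mset_commute)
next
  case (init_bot S Gam Del)
  show ?case by (rule derivable.init_bot[OF init_bot.hyps])
next
  case (R_and S Gam a1 Del a2)
  have "derivable S Gam (add_mset a1 (add_mset A Del))" "derivable S Gam (add_mset a2 (add_mset A Del))"
    using R_and by (simp_all add: add_mset_commute)
  hence "derivable S Gam (add_mset (And a1 a2) (add_mset A Del))" by (rule derivable.R_and)
  then show ?case by (simp add: add_mset_commute)
next
  case (L_and S a1 a2 Gam Del) then show ?case by (simp add: derivable.L_and)
next
  case (R_or S Gam a1 a2 Del)
  have "derivable S Gam (add_mset a1 (add_mset a2 (add_mset A Del)))"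
    using R_or by (simp add: add_mset_commute)
  hence "derivable S Gam (add_mset (Or a1 a2) (add_mset A Del))" by (rule derivable.R_or)
  then show ?case by (simp add: add_mset_commute)
next
  case (L_or S a1 Gam Del a2) then show ?case by (simp add: derivable.L_or)
next
  case (R_imp S a1 Gam a2 Del)
  have "derivable S (add_mset a1 Gam) (add_mset a2 (add_mset A Del))"
    using R_imp by (simp add: add_mset_commute)
  hence "derivable S Gam (add_mset (Imp a1 a2) (add_mset A Del))" by (rule derivable.R_imp)
  then show ?case by (simp add: add_mset_commute)
next
  case (L_imp S Gam a1 Del a2)
  have "derivable S Gam (add_mset a1 (add_mset A Del))" "derivable S (add_mset a2 Gam) (add_mset A Del)"
    using L_imp by (simp_all add: add_mset_commute)
  thus ?case by (rule derivable.L_imp)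
next
  case (R_neg S a Gam Del)
  hence "derivable S Gam (add_mset (Neg a) (add_mset A Del))" by (intro derivable.R_neg) simp
  then show ?case by (simp add: add_mset_commute)
next
  case (L_neg S Gam a Del)
  have "derivable S Gam (add_mset a (add_mset A Del))"
    using L_neg by (simp add: add_mset_commute)
  thus ?case by (rule derivable.L_neg)
next
  case (D_K Ps b G S Pi Om)
  have "derivable (S + image_mset (\<lambda>(H, a). Box H a) Ps) Pi (add_mset (Box G b) (add_mset A Om))"
    using D_K by (intro derivable.D_K) auto
  then show ?case by (simp add: add_mset_commute)
next
  case (D_T G a S Gam Del) then show ?case by (simp add: derivable.D_T)
qed

lemma WS_box:
  assumes WLc: "\<And>S G D. derivable S G D \<Longrightarrow> derivable S (add_mset c G) D"
  shows "derivable S G D \<Longrightarrow> derivable (add_mset (Box K c) S) G D"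
proof (induction rule: derivable.induct)
  case (init_atom S p Gam Del) then show ?case by (simp add: derivable.init_atom)
next
  case (init_bot S Gam Del) then show ?case by (simp add: derivable.init_bot)
next
  case (R_and S Gam a1 Del a2) then show ?case by (simp add: derivable.R_and)
next
  case (L_and S a1 a2 Gam Del) then show ?case by (simp add: derivable.L_and)
next
  case (R_or S Gam a1 a2 Del) then show ?case by (simp add: derivable.R_or)
next
  case (L_or S a1 Gam Del a2) then show ?case by (simp add: derivable.L_or)
next
  case (R_imp S a1 Gam a2 Del) then show ?case by (simp add: derivable.R_imp)
next
  case (L_imp S Gam a1 Del a2) then show ?case by (simp add: derivable.L_imp)
next
  case (R_neg S a Gam Del) then show ?case by (simp add: derivable.R_neg)
next
  case (L_neg S Gam a Del) then show ?case by (simp add: derivable.L_neg)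
next
  case (D_K Ps b G S Pi Om)
  show ?case
  proof (cases "K \<subseteq> G")
    case True
    have "derivable (S + image_mset (\<lambda>(H, a). Box H a) (add_mset (K, c) Ps)) Pi (add_mset (Box G b) Om)"
      using D_K True WLc[OF D_K(1)] by (intro derivable.D_K) auto
    then show ?thesis by simp
  next
    case False
    have "derivable (add_mset (Box K c) S + image_mset (\<lambda>(H, a). Box H a) Ps) Pi (add_mset (Box G b) Om)"
      using D_K False by (intro derivable.D_K) auto
    then show ?thesis by simp
  qed
next
  case (D_T G a S Gam Del)
  have "derivable (add_mset (Box G a) (add_mset (Box K c) S)) (add_mset a Gam) Del"
    using D_T by (simp add: add_mset_commute)
  then show ?case by (rule derivable.D_T)
qed

lemma weak_all:
  "(\<forall>S G D. derivable S G D \<longrightarrow> derivable S (add_mset A G) D) \<and>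
   (\<forall>S G D. derivable S G D \<longrightarrow> derivable S G (add_mset A D)) \<and>
   (\<forall>K S G D. derivable S G D \<longrightarrow> derivable (add_mset (Box K A) S) G D)"
proof (induction A)
  case (Atom x)
  have L: "derivable S (add_mset (Atom x) G) D" if "derivable S G D" for S G D
    using WL_ab[OF that] by simp
  have R: "derivable S G (add_mset (Atom x) D)" if "derivable S G D" for S G D
    using WR_abb[OF that] by simp
  show ?case using L R WS_box[OF L] by (intro conjI allI impI) 
next
  case Bot
  have L: "derivable S (add_mset Bot G) D" if "derivable S G D" for S G D
    using WL_ab[OF that] by simp
  have R: "derivable S G (add_mset Bot D)" if "derivable S G D" for S G D
    using WR_abb[OF that] by simp
  show ?case using L R WS_box[OF L] by (intro conjI allI impI) 
next
  case (And a b)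
  note La = And(1)[THEN conjunct1, rule_format]
  note Ra = And(1)[THEN conjunct2, THEN conjunct1, rule_format]
  note Lb = And(2)[THEN conjunct1, rule_format]
  note Rb = And(2)[THEN conjunct2, THEN conjunct1, rule_format]
  have L: "derivable S (add_mset (And a b) G) D" if "derivable S G D" for S G D
    using La[OF Lb[OF that]] by (rule derivable.L_and)
  have R: "derivable S G (add_mset (And a b) D)" if "derivable S G D" for S G D
    using Ra[OF that] Rb[OF that] by (rule derivable.R_and)
  show ?case using L R WS_box[OF L] by (intro conjI allI impI) 
next
  case (Or a b)
  note La = Or(1)[THEN conjunct1, rule_format]
  note Ra = Or(1)[THEN conjunct2, THEN conjunct1, rule_format]
  note Lb = Or(2)[THEN conjunct1, rule_format]
  note Rb = Or(2)[THEN conjunct2, THEN conjunct1, rule_format]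
  have L: "derivable S (add_mset (Or a b) G) D" if "derivable S G D" for S G D
    using La[OF that] Lb[OF that] by (rule derivable.L_or)
  have R: "derivable S G (add_mset (Or a b) D)" if "derivable S G D" for S G D
    using Ra[OF Rb[OF that]] by (rule derivable.R_or)
  show ?case using L R WS_box[OF L] by (intro conjI allI impI) 
next
  case (Imp a b)
  note La = Imp(1)[THEN conjunct1, rule_format]
  note Ra = Imp(1)[THEN conjunct2, THEN conjunct1, rule_format]
  note Lb = Imp(2)[THEN conjunct1, rule_format]
  note Rb = Imp(2)[THEN conjunct2, THEN conjunct1, rule_format]
  have L: "derivable S (add_mset (Imp a b) G) D" if "derivable S G D" for S G D
    using Ra[OF that] Lb[OF that] by (rule derivable.L_imp)
  have R: "derivable S G (add_mset (Imp a b) D)" if "derivable S G D" for S G D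
    using La[OF Rb[OF that]] by (rule derivable.R_imp)
  show ?case using L R WS_box[OF L] by (intro conjI allI impI) 
next
  case (Neg a)
  note La = Neg[THEN conjunct1, rule_format]
  note Ra = Neg[THEN conjunct2, THEN conjunct1, rule_format]
  have L: "derivable S (add_mset (Neg a) G) D" if "derivable S G D" for S G D
    using Ra[OF that] by (rule derivable.L_neg)
  have R: "derivable S G (add_mset (Neg a) D)" if "derivable S G D" for S G D
    using La[OF that] by (rule derivable.R_neg)
  show ?case using L R WS_box[OF L] by (intro conjI allI impI) 
next
  case (Box K c)
  note Lc = Box[THEN conjunct1, rule_format]
  note Sc = Box[THEN conjunct2, THEN conjunct2, rule_format]
  have L: "derivable S (add_mset (Box K c) G) D" if "derivable S G D" for S G D
    using Sc[OF Lc[OF that]] by (rule derivable.D_T)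
  have R: "derivable S G (add_mset (Box K c) D)" if "derivable S G D" for S G D
    using WR_abb[OF that] by simp
  show ?case using L R WS_box[OF L] by (intro conjI allI impI) 
qed

lemma weakL1: "derivable S G D \<Longrightarrow> derivable S (add_mset A G) D" using weak_all by blast
lemma weakR1: "derivable S G D \<Longrightarrow> derivable S G (add_mset A D)" using weak_all by blast
lemma weakS1: "derivable S G D \<Longrightarrow> derivable (add_mset (Box K A) S) G D" using weak_all by blast

lemma weakL: "derivable S G D \<Longrightarrow> derivable S (G + G') D"
proof (induction G')
  case (add x G') then show ?case using weakL1[OF add.IH[OF add.prems], of x] by simp
qed simp
lemma weakR: "derivable S G D \<Longrightarrow> derivable S G (D + D')"
proof (induction D')
  case (add x D') then show ?case using weakR1[OF add.IH[OF add.prems], of x] by simp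
qed simp
lemma weakS: "boxed_ms S' \<Longrightarrow> derivable S G D \<Longrightarrow> derivable (S + S') G D"
proof (induction S')
  case empty then show ?case by simp
next
  case (add x S')
  then obtain K c where "x = Box K c" by (cases x) auto
  have "boxed_ms S'" using add.prems by simp
  with add.IH add.prems(2) have "derivable (S + S') G D" by simp
  then show ?case using weakS1[of "S + S'" G D K c] `x = Box K c` by simp
qed
lemma weak: "boxed_ms S' \<Longrightarrow> derivable S G D \<Longrightarrow> derivable (S + S') (G + G') (D + D')"
  using weakS weakL weakR by blast



fun prinL :: "('a,'p) fm \<Rightarrow> ('a,'p) fm multiset \<Rightarrow> ('a,'p) fm multiset \<Rightarrow> ('a,'p) fm multiset \<Rightarrow> bool" where
  "prinL (And a b) S G D = derivable S (add_mset a (add_mset b G)) D"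
| "prinL (Or a b) S G D = (derivable S (add_mset a G) D \<and> derivable S (add_mset b G) D)"
| "prinL (Imp a b) S G D = (derivable S G (add_mset a D) \<and> derivable S (add_mset b G) D)"
| "prinL (Neg a) S G D = derivable S G (add_mset a D)"
| "prinL (Box K a) S G D = derivable (add_mset (Box K a) S) (add_mset a G) D"
| "prinL _ S G D = False"

fun prinR :: "('a,'p) fm \<Rightarrow> ('a,'p) fm multiset \<Rightarrow> ('a,'p) fm multiset \<Rightarrow> ('a,'p) fm multiset \<Rightarrow> bool" where
  "prinR (And a b) S G D = (derivable S G (add_mset a D) \<and> derivable S G (add_mset b D))"
| "prinR (Or a b) S G D = derivable S G (add_mset a (add_mset b D))"
| "prinR (Imp a b) S G D = derivable S (add_mset a G) (add_mset b D)"
| "prinR (Neg a) S G D = derivable S (add_mset a G) D"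
| "prinR _ S G D = False"

lemma invL_gen:
  assumes pr: "\<And>S G0 D. prinL X S G0 D \<Longrightarrow> derivable (S + Sx) (G0 + Gx) (D + Dx)"
    and bx: "boxed_ms Sx" and nab: "\<not> atom_or_bot X"
  shows "derivable S G D \<Longrightarrow> X \<in># G \<Longrightarrow> derivable (S + Sx) (G - {#X#} + Gx) (D + Dx)"
proof (induction rule: derivable.induct)
  case (init_atom S p Gam Del)
  then have "X \<in># Gam" using nab by auto
  then show ?case using init_atom bx by (simp add: derivable.init_atom)
next
  case (init_bot S Gam Del)
  then have "X \<in># Gam" using nab by auto
  then show ?case using init_bot bx by (simp add: derivable.init_bot)
next
  case (R_and S Gam a1 Del a2) then show ?case by (simp add: derivable.R_and)
next
  case (L_and S a1 a2 Gam Del)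
  show ?case
  proof (cases "X = And a1 a2")
    case True thus ?thesis using L_and.hyps(1) pr[of S Gam Del] by simp
  next
    case False
    hence "X \<in># Gam" using L_and.prems by simp
    thus ?thesis using L_and.IH by (simp add: derivable.L_and)
  qed
next
  case (R_or S Gam a1 a2 Del) then show ?case by (simp add: derivable.R_or)
next
  case (L_or S a1 Gam Del a2)
  show ?case
  proof (cases "X = Or a1 a2")
    case True thus ?thesis using L_or.hyps pr[of S Gam Del] by simp
  next
    case False
    hence "X \<in># Gam" using L_or.prems by simp
    thus ?thesis using L_or.IH by (simp add: derivable.L_or)
  qed
next
  case (R_imp S a1 Gam a2 Del)
  then show ?case by (simp add: derivable.R_imp)
next
  case (L_imp S Gam a1 Del a2)
  show ?case
  proof (cases "X = Imp a1 a2")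
    case True thus ?thesis using L_imp.hyps pr[of S Gam Del] by simp
  next
    case False
    hence "X \<in># Gam" using L_imp.prems by simp
    thus ?thesis using L_imp.IH by (simp add: derivable.L_imp)
  qed
next
  case (R_neg S a Gam Del) then show ?case by (simp add: derivable.R_neg)
next
  case (L_neg S Gam a Del)
  show ?case
  proof (cases "X = Neg a")
    case True thus ?thesis using L_neg.hyps(1) pr[of S Gam Del] by simp
  next
    case False
    hence "X \<in># Gam" using L_neg.prems by simp
    thus ?thesis using L_neg.IH by (simp add: derivable.L_neg)
  qed
next
  case (D_K Ps b G S Pi Om)
  then show ?case using nab by auto
next
  case (D_T G a S Gam Del)
  show ?case
  proof (cases "X = Box G a")
    case True thus ?thesis using D_T.hyps(1) pr[of S Gam Del] by simp
  next
    case False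
    hence "X \<in># Gam" using D_T.prems by simp
    thus ?thesis using D_T.IH by (simp add: derivable.D_T)
  qed
qed

lemma invR_gen:
  assumes pr: "\<And>S G D0. prinR X S G D0 \<Longrightarrow> derivable (S + Sx) (G + Gx) (D0 + Dx)"
    and bx: "boxed_ms Sx" and nab: "\<not> atom_or_bot X" and nbx: "\<not> boxed X"
  shows "derivable S G D \<Longrightarrow> X \<in># D \<Longrightarrow> derivable (S + Sx) (G + Gx) (D - {#X#} + Dx)"
proof (induction rule: derivable.induct)
  case (init_atom S p Gam Del)
  then have "X \<in># Del" using nab by auto
  then show ?case using init_atom bx by (simp add: derivable.init_atom)
next
  case (init_bot S Gam Del)
  then show ?case using bx by (simp add: derivable.init_bot)
next
  case (L_and S a1 a2 Gam Del) then show ?case by (simp add: derivable.L_and)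
next
  case (R_and S Gam a1 Del a2)
  show ?case
  proof (cases "X = And a1 a2")
    case True thus ?thesis using R_and.hyps pr[of S Gam Del] by simp
  next
    case False
    hence "X \<in># Del" using R_and.prems by simp
    thus ?thesis using R_and.IH by (simp add: derivable.R_and)
  qed
next
  case (L_or S a1 Gam Del a2) then show ?case by (simp add: derivable.L_or)
next
  case (R_or S Gam a1 a2 Del)
  show ?case
  proof (cases "X = Or a1 a2")
    case True thus ?thesis using R_or.hyps(1) pr[of S Gam Del] by simp
  next
    case False
    hence "X \<in># Del" using R_or.prems by simp
    thus ?thesis using R_or.IH by (simp add: derivable.R_or)
  qed
next
  case (L_imp S Gam a1 Del a2)
  then show ?case by (simp add: derivable.L_imp)
next
  case (R_imp S a1 Gam a2 Del)
  show ?case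
  proof (cases "X = Imp a1 a2")
    case True thus ?thesis using R_imp.hyps(1) pr[of S Gam Del] by simp
  next
    case False
    hence "X \<in># Del" using R_imp.prems by simp
    thus ?thesis using R_imp.IH by (simp add: derivable.R_imp)
  qed
next
  case (L_neg S Gam a Del) then show ?case by (simp add: derivable.L_neg)
next
  case (R_neg S a Gam Del)
  show ?case
  proof (cases "X = Neg a")
    case True thus ?thesis using R_neg.hyps(1) pr[of S Gam Del] by simp
  next
    case False
    hence "X \<in># Del" using R_neg.prems by simp
    thus ?thesis using R_neg.IH by (simp add: derivable.R_neg)
  qed
next
  case (D_K Ps b G S Pi Om)
  then show ?case using nab nbx by auto
next
  case (D_T G a S Gam Del)
  then show ?case by (simp add: derivable.D_T)
qed



lemma inv_L_and: "derivable S (add_mset (And a b) G) D \<Longrightarrow> derivable S (add_mset a (add_mset b G)) D"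
  using invL_gen[where X="And a b" and Sx="{#}" and Gx="{#a,b#}" and Dx="{#}" and G="add_mset (And a b) G"]
  by (simp add: add_mset_commute)
lemma inv_L_or1: "derivable S (add_mset (Or a b) G) D \<Longrightarrow> derivable S (add_mset a G) D"
  using invL_gen[where X="Or a b" and Sx="{#}" and Gx="{#a#}" and Dx="{#}" and G="add_mset (Or a b) G"]
  by (simp add: add_mset_commute)
lemma inv_L_or2: "derivable S (add_mset (Or a b) G) D \<Longrightarrow> derivable S (add_mset b G) D"
  using invL_gen[where X="Or a b" and Sx="{#}" and Gx="{#b#}" and Dx="{#}" and G="add_mset (Or a b) G"]
  by (simp add: add_mset_commute)
lemma inv_L_imp1: "derivable S (add_mset (Imp a b) G) D \<Longrightarrow> derivable S G (add_mset a D)"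
  using invL_gen[where X="Imp a b" and Sx="{#}" and Gx="{#}" and Dx="{#a#}" and G="add_mset (Imp a b) G"]
  by (simp add: add_mset_commute)
lemma inv_L_imp2: "derivable S (add_mset (Imp a b) G) D \<Longrightarrow> derivable S (add_mset b G) D"
  using invL_gen[where X="Imp a b" and Sx="{#}" and Gx="{#b#}" and Dx="{#}" and G="add_mset (Imp a b) G"]
  by (simp add: add_mset_commute)
lemma inv_L_neg: "derivable S (add_mset (Neg a) G) D \<Longrightarrow> derivable S G (add_mset a D)"
  using invL_gen[where X="Neg a" and Sx="{#}" and Gx="{#}" and Dx="{#a#}" and G="add_mset (Neg a) G"]
  by (simp add: add_mset_commute)
lemma inv_L_box: "derivable S (add_mset (Box K a) G) D \<Longrightarrow> derivable (add_mset (Box K a) S) (add_mset a G) D"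
  using invL_gen[where X="Box K a" and Sx="{#Box K a#}" and Gx="{#a#}" and Dx="{#}" and G="add_mset (Box K a) G"]
  by (simp add: add_mset_commute)

lemma inv_R_and1: "derivable S G (add_mset (And a b) D) \<Longrightarrow> derivable S G (add_mset a D)"
  using invR_gen[where X="And a b" and Sx="{#}" and Gx="{#}" and Dx="{#a#}" and D="add_mset (And a b) D"]
  by (simp add: add_mset_commute)
lemma inv_R_and2: "derivable S G (add_mset (And a b) D) \<Longrightarrow> derivable S G (add_mset b D)"
  using invR_gen[where X="And a b" and Sx="{#}" and Gx="{#}" and Dx="{#b#}" and D="add_mset (And a b) D"]
  by (simp add: add_mset_commute)
lemma inv_R_or: "derivable S G (add_mset (Or a b) D) \<Longrightarrow> derivable S G (add_mset a (add_mset b D))"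
  using invR_gen[where X="Or a b" and Sx="{#}" and Gx="{#}" and Dx="{#a,b#}" and D="add_mset (Or a b) D"]
  by (simp add: add_mset_commute)
lemma inv_R_imp: "derivable S G (add_mset (Imp a b) D) \<Longrightarrow> derivable S (add_mset a G) (add_mset b D)"
  using invR_gen[where X="Imp a b" and Sx="{#}" and Gx="{#a#}" and Dx="{#b#}" and D="add_mset (Imp a b) D"]
  by (simp add: add_mset_commute)
lemma inv_R_neg: "derivable S G (add_mset (Neg a) D) \<Longrightarrow> derivable S (add_mset a G) D"
  using invR_gen[where X="Neg a" and Sx="{#}" and Gx="{#a#}" and Dx="{#}" and D="add_mset (Neg a) D"]
  by (simp add: add_mset_commute)



lemma mset_minus_add_neq[simp]: "x \<noteq> y \<Longrightarrow> add_mset y M - {#x#} = add_mset y (M - {#x#})"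
  by (simp add: multiset_eq_iff)

lemma boxed_ms_diff: "boxed_ms A \<Longrightarrow> boxed_ms (A - B)"
  by (auto simp: boxed_ms_def dest: in_diffD)

lemma CL_ab: "derivable S G D \<Longrightarrow> atom_or_bot A \<Longrightarrow> A \<in># G - {#A#} \<Longrightarrow> derivable S (G - {#A#}) D"
proof (induction rule: derivable.induct)
  case (init_atom S p Gam Del)
  show ?case
  proof (cases "A = Atom p")
    case True
    then have "Atom p \<in># Gam" using init_atom.prems by simp
    then have "Gam = add_mset (Atom p) (Gam - {#Atom p#})" by simp
    then have "derivable S Gam (add_mset (Atom p) Del)"
      using derivable.init_atom[OF init_atom.hyps, of p "Gam - {#Atom p#}" Del] by simp
    then show ?thesis using True by simp
  next
    case False
    then show ?thesis by (simp add: derivable.init_atom[OF init_atom.hyps])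
  qed
next
  case (init_bot S Gam Del)
  show ?case
  proof (cases "A = Bot")
    case True
    then have "Bot \<in># Gam" using init_bot.prems by simp
    then have "Gam = add_mset Bot (Gam - {#Bot#})" by simp
    then have "derivable S Gam Del"
      using derivable.init_bot[OF init_bot.hyps, of "Gam - {#Bot#}" Del] by simp
    then show ?thesis using True by simp
  next
    case False
    then show ?thesis by (simp add: derivable.init_bot[OF init_bot.hyps])
  qed
next
  case (R_and S Gam a1 Del a2) then show ?case by (simp add: derivable.R_and)
next
  case (L_and S a1 a2 Gam Del)
  then have ne: "A \<noteq> And a1 a2" by auto
  with L_and.prems have m: "A \<in># Gam - {#A#}" by simp
  hence "A \<in># Gam" by (rule in_diffD)
  with m L_and show ?case using ne by (simp add: derivable.L_and)
next
  case (R_or S Gam a1 a2 Del) then show ?case by (simp add: derivable.R_or)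
next
  case (L_or S a1 Gam Del a2)
  then have ne: "A \<noteq> Or a1 a2" by auto
  with L_or.prems have m: "A \<in># Gam - {#A#}" by simp
  hence "A \<in># Gam" by (rule in_diffD)
  with m L_or show ?case using ne by (simp add: derivable.L_or)
next
  case (R_imp S a1 Gam a2 Del)
  hence "A \<in># Gam" by (auto dest: in_diffD)
  with R_imp show ?case by (simp add: derivable.R_imp)
next
  case (L_imp S Gam a1 Del a2)
  then have ne: "A \<noteq> Imp a1 a2" by auto
  with L_imp.prems have m: "A \<in># Gam - {#A#}" by simp
  hence "A \<in># Gam" by (rule in_diffD)
  with m L_imp show ?case using ne by (simp add: derivable.L_imp)
next
  case (R_neg S a Gam Del)
  hence "A \<in># Gam" by (auto dest: in_diffD)
  with R_neg show ?case by (simp add: derivable.R_neg)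
next
  case (L_neg S Gam a Del)
  then have ne: "A \<noteq> Neg a" by auto
  with L_neg.prems have m: "A \<in># Gam - {#A#}" by simp
  hence "A \<in># Gam" by (rule in_diffD)
  with m L_neg show ?case using ne by (simp add: derivable.L_neg)
next
  case (D_K Ps b G S Pi Om)
  then show ?case by (intro derivable.D_K) (auto dest: in_diffD)
next
  case (D_T G a S Gam Del)
  then have ne: "A \<noteq> Box G a" by auto
  with D_T.prems have m: "A \<in># Gam - {#A#}" by simp
  hence "A \<in># Gam" by (rule in_diffD)
  with m D_T show ?case using ne by (simp add: derivable.D_T)
qed



lemma CR_abb: "derivable S G D \<Longrightarrow> atom_or_bot A \<or> boxed A \<Longrightarrow> A \<in># D - {#A#} \<Longrightarrow> derivable S G (D - {#A#})"
proof (induction rule: derivable.induct)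
  case (init_atom S p Gam Del)
  show ?case
  proof (cases "A = Atom p")
    case True
    then have "Atom p \<in># Del" using init_atom.prems by simp
    then have "Del = add_mset (Atom p) (Del - {#Atom p#})" by simp
    then have "derivable S (add_mset (Atom p) Gam) Del"
      using derivable.init_atom[OF init_atom.hyps, of p Gam "Del - {#Atom p#}"] by simp
    then show ?thesis using True by simp
  next
    case False
    then show ?thesis by (simp add: derivable.init_atom[OF init_atom.hyps])
  qed
next
  case (init_bot S Gam Del)
  then show ?case by (simp add: derivable.init_bot)
next
  case (L_and S a1 a2 Gam Del) then show ?case by (simp add: derivable.L_and)
next
  case (R_and S Gam a1 Del a2)
  then have ne: "A \<noteq> And a1 a2" by auto
  with R_and.prems have m: "A \<in># Del - {#A#}" by simp
  hence "A \<in># Del" by (rule in_diffD)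
  with m R_and show ?case using ne by (simp add: derivable.R_and)
next
  case (L_or S a1 Gam Del a2) then show ?case by (simp add: derivable.L_or)
next
  case (R_or S Gam a1 a2 Del)
  then have ne: "A \<noteq> Or a1 a2" by auto
  with R_or.prems have m: "A \<in># Del - {#A#}" by simp
  hence "A \<in># Del" by (rule in_diffD)
  with m R_or show ?case using ne by (simp add: derivable.R_or)
next
  case (L_imp S Gam a1 Del a2)
  hence "A \<in># Del" by (auto dest: in_diffD)
  with L_imp show ?case by (simp add: derivable.L_imp)
next
  case (R_imp S a1 Gam a2 Del)
  then have ne: "A \<noteq> Imp a1 a2" by auto
  with R_imp.prems have m: "A \<in># Del - {#A#}" by simp
  hence "A \<in># Del" by (rule in_diffD)
  with m R_imp show ?case using ne by (simp add: derivable.R_imp)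
next
  case (L_neg S Gam a Del)
  hence "A \<in># Del" by (auto dest: in_diffD)
  with L_neg show ?case by (simp add: derivable.L_neg)
next
  case (R_neg S a Gam Del)
  then have ne: "A \<noteq> Neg a" by auto
  with R_neg.prems have m: "A \<in># Del - {#A#}" by simp
  hence "A \<in># Del" by (rule in_diffD)
  with m R_neg show ?case using ne by (simp add: derivable.R_neg)
next
  case (D_K Ps b G S Pi Om)
  show ?case
  proof (cases "A = Box G b")
    case True
    then have "A \<in># Om" using D_K.prems by simp
    then have eq: "Om = add_mset (Box G b) (Om - {#Box G b#})" using True by simp
    have "derivable (S + image_mset (\<lambda>(H, a). Box H a) Ps) Pi (add_mset (Box G b) (Om - {#Box G b#}))"
      using D_K by (intro derivable.D_K) (auto dest: in_diffD)
    then show ?thesis using True eq by simp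
  next
    case False
    then have "A \<in># Om" using D_K.prems by (auto dest: in_diffD)
    have "derivable (S + image_mset (\<lambda>(H, a). Box H a) Ps) Pi (add_mset (Box G b) (Om - {#A#}))"
      using D_K by (intro derivable.D_K) (auto dest: in_diffD)
    then show ?thesis using False `A \<in># Om` by simp
  qed
next
  case (D_T G a S Gam Del)
  then show ?case by (simp add: derivable.D_T)
qed

lemma box_image_mem: "Box K c \<in># image_mset (\<lambda>(H, a). Box H a) Ps \<longleftrightarrow> (K, c) \<in># Ps"
proof
  assume "Box K c \<in># image_mset (\<lambda>(H, a). Box H a) Ps"
  then obtain x where "x \<in># Ps" "Box K c = (\<lambda>(H, a). Box H a) x" by auto
  then show "(K, c) \<in># Ps" by (cases x) auto
next
  assume "(K, c) \<in># Ps"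
  then show "Box K c \<in># image_mset (\<lambda>(H, a). Box H a) Ps" by force
qed

lemma plus_minus_notin: "x \<notin># B \<Longrightarrow> A + B - {#x#} = A - {#x#} + B"
  by (simp add: multiset_eq_iff) (metis count_eq_zero_iff diff_add_zero add_diff_assoc2 le_add2 add.commute diff_le_self add_diff_cancel_left' not_in_iff)

lemma CS_box:
  assumes CLc: "\<And>S G D. derivable S G D \<Longrightarrow> c \<in># G - {#c#} \<Longrightarrow> derivable S (G - {#c#}) D"
  shows "derivable S G D \<Longrightarrow> Box K c \<in># S - {#Box K c#} \<Longrightarrow> derivable (S - {#Box K c#}) G D"
proof (induction rule: derivable.induct)
  case (init_atom S p Gam Del) then show ?case by (simp add: derivable.init_atom boxed_ms_diff)
next
  case (init_bot S Gam Del) then show ?case by (simp add: derivable.init_bot boxed_ms_diff)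
next
  case (R_and S Gam a1 Del a2) then show ?case by (simp add: derivable.R_and)
next
  case (L_and S a1 a2 Gam Del) then show ?case by (simp add: derivable.L_and)
next
  case (R_or S Gam a1 a2 Del) then show ?case by (simp add: derivable.R_or)
next
  case (L_or S a1 Gam Del a2) then show ?case by (simp add: derivable.L_or)
next
  case (R_imp S a1 Gam a2 Del) then show ?case by (simp add: derivable.R_imp)
next
  case (L_imp S Gam a1 Del a2) then show ?case by (simp add: derivable.L_imp)
next
  case (R_neg S a Gam Del) then show ?case by (simp add: derivable.R_neg)
next
  case (L_neg S Gam a Del) then show ?case by (simp add: derivable.L_neg)
next
  case (D_K Ps b G S Pi Om)
  let ?bx = "\<lambda>(H, a). Box H a"
  show ?case
  proof (cases "K \<subseteq> G")
    case True
    then have nS: "Box K c \<notin># S" using D_K.hyps(3) by auto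
    have m2: "Box K c \<in># S + image_mset ?bx Ps - {#Box K c#}" using D_K.prems .
    hence "Box K c \<in># image_mset ?bx Ps" by (auto dest: in_diffD simp: nS)
    hence "(K, c) \<in># Ps" by (metis box_image_mem)
    then obtain Ps0 where Ps: "Ps = add_mset (K, c) Ps0" by (metis multi_member_split)
    have "Box K c \<in># S + image_mset ?bx Ps0" using m2 Ps by simp
    hence "(K, c) \<in># Ps0" using nS by (metis box_image_mem union_iff)
    hence "c \<in># image_mset snd Ps0" by force
    hence "derivable {#} (image_mset snd Ps0) {#b#}"
      using CLc[OF D_K.hyps(1)] Ps by simp
    hence "derivable (S + image_mset ?bx Ps0) Pi (add_mset (Box G b) Om)"
      using D_K Ps by (intro derivable.D_K) auto
    then show ?thesis using Ps by simp
  next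
    case False
    then have "(K, c) \<notin># Ps" using D_K.hyps(2) by auto
    hence nP: "Box K c \<notin># image_mset ?bx Ps" by (metis box_image_mem)
    then have eq: "S + image_mset ?bx Ps - {#Box K c#} = (S - {#Box K c#}) + image_mset ?bx Ps"
      by (rule plus_minus_notin)
    have "Box K c \<in># S - {#Box K c#}" using D_K.prems nP eq
      by (metis add_diff_cancel_right' count_eq_zero_iff count_union in_diff_count less_nat_zero_code plus_nat.add_0)
    have "derivable ((S - {#Box K c#}) + image_mset ?bx Ps) Pi (add_mset (Box G b) Om)"
      using D_K by (intro derivable.D_K) (auto dest: in_diffD)
    then show ?thesis using eq by simp
  qed
next
  case (D_T G a S Gam Del)
  then have "Box K c \<in># S" by (auto dest: in_diffD)
  then have "add_mset (Box G a) S - {#Box K c#} = add_mset (Box G a) (S - {#Box K c#})" by simp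
  then show ?case using D_T by (simp add: derivable.D_T)
qed



lemma CL_conv:
  assumes L: "\<And>S G D. derivable S (add_mset A (add_mset A G)) D \<Longrightarrow> derivable S (add_mset A G) D"
  shows "derivable S G D \<Longrightarrow> A \<in># G - {#A#} \<Longrightarrow> derivable S (G - {#A#}) D"
proof -
  assume d: "derivable S G D" and m: "A \<in># G - {#A#}"
  have m1: "A \<in># G" using m by (rule in_diffD)
  have e1: "G - {#A#} = add_mset A (G - {#A#} - {#A#})" by (rule insert_DiffM[OF m, symmetric])
  have "G = add_mset A (G - {#A#})" by (rule insert_DiffM[OF m1, symmetric])
  also have "\<dots> = add_mset A (add_mset A (G - {#A#} - {#A#}))" using e1 by simp
  finally have "derivable S (add_mset A (add_mset A (G - {#A#} - {#A#}))) D" using d by (rule subst)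
  then have "derivable S (add_mset A (G - {#A#} - {#A#})) D" by (rule L)
  then show ?thesis by (subst e1)
qed

lemma CS_conv:
  assumes L: "\<And>S G D. derivable S (add_mset A (add_mset A G)) D \<Longrightarrow> derivable S (add_mset A G) D"
  shows "derivable (add_mset (Box K A) (add_mset (Box K A) S)) G D \<Longrightarrow> derivable (add_mset (Box K A) S) G D"
  using CS_box[OF CL_conv[OF L], of "add_mset (Box K A) (add_mset (Box K A) S)" G D K] by simp

lemma contr_all:
  "(\<forall>S G D. derivable S (add_mset A (add_mset A G)) D \<longrightarrow> derivable S (add_mset A G) D) \<and>
   (\<forall>S G D. derivable S G (add_mset A (add_mset A D)) \<longrightarrow> derivable S G (add_mset A D)) \<and>
   (\<forall>K S G D. derivable (add_mset (Box K A) (add_mset (Box K A) S)) G D \<longrightarrow> derivable (add_mset (Box K A) S) G D)"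
proof (induction A)
  case (Atom x)
  have L: "derivable S (add_mset (Atom x) G) D" if "derivable S (add_mset (Atom x) (add_mset (Atom x) G)) D" for S G D
    using CL_ab[OF that, of "Atom x"] by simp
  have R: "derivable S G (add_mset (Atom x) D)" if "derivable S G (add_mset (Atom x) (add_mset (Atom x) D))" for S G D
    using CR_abb[OF that, of "Atom x"] by simp
  show ?case using L R CS_conv[OF L] by (intro conjI allI impI) 
next
  case Bot
  have L: "derivable S (add_mset Bot G) D" if "derivable S (add_mset Bot (add_mset Bot G)) D" for S G D
    using CL_ab[OF that, of "Bot"] by simp
  have R: "derivable S G (add_mset Bot D)" if "derivable S G (add_mset Bot (add_mset Bot D))" for S G D
    using CR_abb[OF that, of "Bot"] by simp
  show ?case using L R CS_conv[OF L] by (intro conjI allI impI) 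
next
  case (And a b)
  note La = And(1)[THEN conjunct1, rule_format]
  note Ra = And(1)[THEN conjunct2, THEN conjunct1, rule_format]
  note Lb = And(2)[THEN conjunct1, rule_format]
  note Rb = And(2)[THEN conjunct2, THEN conjunct1, rule_format]
  have L: "derivable S (add_mset (And a b) G) D" if d: "derivable S (add_mset (And a b) (add_mset (And a b) G)) D" for S G D
  proof -
    have "derivable S (add_mset a (add_mset b (add_mset (And a b) G))) D" using inv_L_and[OF d] .
    hence "derivable S (add_mset (And a b) (add_mset a (add_mset b G))) D" by (simp add: add_mset_commute)
    hence "derivable S (add_mset a (add_mset b (add_mset a (add_mset b G)))) D" by (rule inv_L_and)
    hence "derivable S (add_mset a (add_mset a (add_mset b (add_mset b G)))) D" by (simp add: add_mset_commute)
    hence "derivable S (add_mset a (add_mset b (add_mset b G))) D" by (rule La)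
    hence "derivable S (add_mset b (add_mset b (add_mset a G))) D" by (simp add: add_mset_commute)
    hence "derivable S (add_mset b (add_mset a G)) D" by (rule Lb)
    hence "derivable S (add_mset a (add_mset b G)) D" by (simp add: add_mset_commute)
    thus ?thesis by (rule derivable.L_and)
  qed
  have R: "derivable S G (add_mset (And a b) D)" if d: "derivable S G (add_mset (And a b) (add_mset (And a b) D))" for S G D
  proof -
    have "derivable S G (add_mset a (add_mset (And a b) D))" using inv_R_and1[OF d] .
    hence "derivable S G (add_mset (And a b) (add_mset a D))" by (simp add: add_mset_commute)
    hence "derivable S G (add_mset a (add_mset a D))" by (rule inv_R_and1)
    hence 1: "derivable S G (add_mset a D)" by (rule Ra)
    have "derivable S G (add_mset b (add_mset (And a b) D))" using inv_R_and2[OF d] .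
    hence "derivable S G (add_mset (And a b) (add_mset b D))" by (simp add: add_mset_commute)
    hence "derivable S G (add_mset b (add_mset b D))" by (rule inv_R_and2)
    hence 2: "derivable S G (add_mset b D)" by (rule Rb)
    from 1 2 show ?thesis by (rule derivable.R_and)
  qed
  show ?case using L R CS_conv[OF L] by (intro conjI allI impI) 
next
  case (Or a b)
  note La = Or(1)[THEN conjunct1, rule_format]
  note Ra = Or(1)[THEN conjunct2, THEN conjunct1, rule_format]
  note Lb = Or(2)[THEN conjunct1, rule_format]
  note Rb = Or(2)[THEN conjunct2, THEN conjunct1, rule_format]
  have L: "derivable S (add_mset (Or a b) G) D" if d: "derivable S (add_mset (Or a b) (add_mset (Or a b) G)) D" for S G D
  proof -
    have "derivable S (add_mset a (add_mset (Or a b) G)) D" using inv_L_or1[OF d] .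
    hence "derivable S (add_mset (Or a b) (add_mset a G)) D" by (simp add: add_mset_commute)
    hence "derivable S (add_mset a (add_mset a G)) D" by (rule inv_L_or1)
    hence 1: "derivable S (add_mset a G) D" by (rule La)
    have "derivable S (add_mset b (add_mset (Or a b) G)) D" using inv_L_or2[OF d] .
    hence "derivable S (add_mset (Or a b) (add_mset b G)) D" by (simp add: add_mset_commute)
    hence "derivable S (add_mset b (add_mset b G)) D" by (rule inv_L_or2)
    hence 2: "derivable S (add_mset b G) D" by (rule Lb)
    from 1 2 show ?thesis by (rule derivable.L_or)
  qed
  have R: "derivable S G (add_mset (Or a b) D)" if d: "derivable S G (add_mset (Or a b) (add_mset (Or a b) D))" for S G D
  proof -
    have "derivable S G (add_mset a (add_mset b (add_mset (Or a b) D)))" using inv_R_or[OF d] .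
    hence "derivable S G (add_mset (Or a b) (add_mset a (add_mset b D)))" by (simp add: add_mset_commute)
    hence "derivable S G (add_mset a (add_mset b (add_mset a (add_mset b D))))" by (rule inv_R_or)
    hence "derivable S G (add_mset a (add_mset a (add_mset b (add_mset b D))))" by (simp add: add_mset_commute)
    hence "derivable S G (add_mset a (add_mset b (add_mset b D)))" by (rule Ra)
    hence "derivable S G (add_mset b (add_mset b (add_mset a D)))" by (simp add: add_mset_commute)
    hence "derivable S G (add_mset b (add_mset a D))" by (rule Rb)
    hence "derivable S G (add_mset a (add_mset b D))" by (simp add: add_mset_commute)
    thus ?thesis by (rule derivable.R_or)
  qed
  show ?case using L R CS_conv[OF L] by (intro conjI allI impI) 
next
  case (Imp a b)
  note La = Imp(1)[THEN conjunct1, rule_format]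
  note Ra = Imp(1)[THEN conjunct2, THEN conjunct1, rule_format]
  note Lb = Imp(2)[THEN conjunct1, rule_format]
  note Rb = Imp(2)[THEN conjunct2, THEN conjunct1, rule_format]
  have L: "derivable S (add_mset (Imp a b) G) D" if d: "derivable S (add_mset (Imp a b) (add_mset (Imp a b) G)) D" for S G D
  proof -
    have "derivable S (add_mset (Imp a b) G) (add_mset a D)" using inv_L_imp1[OF d] .
    hence "derivable S G (add_mset a (add_mset a D))" by (rule inv_L_imp1)
    hence 1: "derivable S G (add_mset a D)" by (rule Ra)
    have "derivable S (add_mset b (add_mset (Imp a b) G)) D" using inv_L_imp2[OF d] .
    hence "derivable S (add_mset (Imp a b) (add_mset b G)) D" by (simp add: add_mset_commute)
    hence "derivable S (add_mset b (add_mset b G)) D" by (rule inv_L_imp2)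
    hence 2: "derivable S (add_mset b G) D" by (rule Lb)
    from 1 2 show ?thesis by (rule derivable.L_imp)
  qed
  have R: "derivable S G (add_mset (Imp a b) D)" if d: "derivable S G (add_mset (Imp a b) (add_mset (Imp a b) D))" for S G D
  proof -
    have "derivable S (add_mset a G) (add_mset b (add_mset (Imp a b) D))" using inv_R_imp[OF d] .
    hence "derivable S (add_mset a G) (add_mset (Imp a b) (add_mset b D))" by (simp add: add_mset_commute)
    hence "derivable S (add_mset a (add_mset a G)) (add_mset b (add_mset b D))" by (rule inv_R_imp)
    hence "derivable S (add_mset a G) (add_mset b (add_mset b D))" by (rule La)
    hence "derivable S (add_mset a G) (add_mset b D)" by (rule Rb)
    thus ?thesis by (rule derivable.R_imp)
  qed
  show ?case using L R CS_conv[OF L] by (intro conjI allI impI) 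
next
  case (Neg a)
  note La = Neg[THEN conjunct1, rule_format]
  note Ra = Neg[THEN conjunct2, THEN conjunct1, rule_format]
  have L: "derivable S (add_mset (Neg a) G) D" if d: "derivable S (add_mset (Neg a) (add_mset (Neg a) G)) D" for S G D
  proof -
    have "derivable S (add_mset (Neg a) G) (add_mset a D)" using inv_L_neg[OF d] .
    hence "derivable S G (add_mset a (add_mset a D))" by (rule inv_L_neg)
    hence "derivable S G (add_mset a D)" by (rule Ra)
    thus ?thesis by (rule derivable.L_neg)
  qed
  have R: "derivable S G (add_mset (Neg a) D)" if d: "derivable S G (add_mset (Neg a) (add_mset (Neg a) D))" for S G D
  proof -
    have "derivable S (add_mset a G) (add_mset (Neg a) D)" using inv_R_neg[OF d] .
    hence "derivable S (add_mset a (add_mset a G)) D" by (rule inv_R_neg)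
    hence "derivable S (add_mset a G) D" by (rule La)
    thus ?thesis by (rule derivable.R_neg)
  qed
  show ?case using L R CS_conv[OF L] by (intro conjI allI impI) 
next
  case (Box K c)
  note Lc = Box[THEN conjunct1, rule_format]
  note Sc = Box[THEN conjunct2, THEN conjunct2, rule_format]
  have L: "derivable S (add_mset (Box K c) G) D" if d: "derivable S (add_mset (Box K c) (add_mset (Box K c) G)) D" for S G D
  proof -
    have "derivable (add_mset (Box K c) S) (add_mset c (add_mset (Box K c) G)) D" using inv_L_box[OF d] .
    hence "derivable (add_mset (Box K c) S) (add_mset (Box K c) (add_mset c G)) D" by (simp add: add_mset_commute)
    hence "derivable (add_mset (Box K c) (add_mset (Box K c) S)) (add_mset c (add_mset c G)) D" by (rule inv_L_box)
    hence "derivable (add_mset (Box K c) (add_mset (Box K c) S)) (add_mset c G) D" by (rule Lc)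
    hence "derivable (add_mset (Box K c) S) (add_mset c G) D" by (rule Sc)
    thus ?thesis by (rule derivable.D_T)
  qed
  have R: "derivable S G (add_mset (Box K c) D)" if "derivable S G (add_mset (Box K c) (add_mset (Box K c) D))" for S G D
    using CR_abb[OF that, of "Box K c"] by simp
  show ?case using L R CS_conv[OF L] by (intro conjI allI impI) 
qed

lemma contrL1: "derivable S (add_mset A (add_mset A G)) D \<Longrightarrow> derivable S (add_mset A G) D"
  using contr_all by blast
lemma contrR1: "derivable S G (add_mset A (add_mset A D)) \<Longrightarrow> derivable S G (add_mset A D)"
  using contr_all by blast

lemma contrL: "derivable S (G + G + G') D \<Longrightarrow> derivable S (G + G') D"
proof (induction G arbitrary: G')
  case empty then show ?case by simp
next
  case (add x G)
  have "derivable S (add_mset x (add_mset x (G + G + G'))) D" using add.prems by (simp add: add_mset_commute)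
  hence "derivable S (add_mset x (G + G + G')) D" by (rule contrL1)
  hence "derivable S (G + G + add_mset x G') D" by simp
  hence "derivable S (G + add_mset x G') D" by (rule add.IH)
  thus ?case by simp
qed

lemma contrR: "derivable S G (D + D + D') \<Longrightarrow> derivable S G (D + D')"
proof (induction D arbitrary: D')
  case empty then show ?case by simp
next
  case (add x D)
  have "derivable S G (add_mset x (add_mset x (D + D + D')))" using add.prems by (simp add: add_mset_commute)
  hence "derivable S G (add_mset x (D + D + D'))" by (rule contrR1)
  hence "derivable S G (D + D + add_mset x D')" by simp
  hence "derivable S G (D + add_mset x D')" by (rule add.IH)
  thus ?case by simp
qed



fun body :: "('a,'p) fm \<Rightarrow> ('a,'p) fm" where
  "body (Box K a) = a"
| "body x = x"

lemma body_box_image[simp]: "image_mset body (image_mset (\<lambda>(H, a). Box H a) Ps) = image_mset snd Ps"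
  by (induction Ps) auto

lemma boxed_image_box[simp]: "boxed_ms (image_mset (\<lambda>(H, a). Box H a) Ps)"
  by (induction Ps) auto

lemma boxed_ex_image: "boxed_ms T \<Longrightarrow> \<exists>PT. T = image_mset (\<lambda>(H, a). Box H a) PT"
proof (induction T)
  case empty show ?case by (rule exI[of _ "{#}"]) simp
next
  case (add x T)
  then obtain K c where x: "x = Box K c" by (cases x) auto
  from add obtain PT where "T = image_mset (\<lambda>(H, a). Box H a) PT" by auto
  then show ?case using x by (intro exI[of _ "add_mset (K, c) PT"]) simp
qed

lemma BR: "derivable S G D \<Longrightarrow> Bot \<in># D \<Longrightarrow> derivable S G (D - {#Bot#})"
proof (induction rule: derivable.induct)
  case (init_atom S p Gam Del)
  then have "Bot \<in># Del" by auto
  then show ?case using init_atom by (simp add: derivable.init_atom)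
next
  case (init_bot S Gam Del) then show ?case by (simp add: derivable.init_bot)
next
  case (R_and S Gam a1 Del a2)
  then have "Bot \<in># Del" by auto
  then show ?case using R_and by (simp add: derivable.R_and)
next
  case (L_and S a1 a2 Gam Del) then show ?case by (simp add: derivable.L_and)
next
  case (R_or S Gam a1 a2 Del)
  then have "Bot \<in># Del" by auto
  then show ?case using R_or by (simp add: derivable.R_or)
next
  case (L_or S a1 Gam Del a2) then show ?case by (simp add: derivable.L_or)
next
  case (R_imp S a1 Gam a2 Del)
  then have "Bot \<in># Del" by auto
  then show ?case using R_imp by (simp add: derivable.R_imp)
next
  case (L_imp S Gam a1 Del a2) then show ?case by (simp add: derivable.L_imp)
next
  case (R_neg S a Gam Del)
  then have "Bot \<in># Del" by auto
  then show ?case using R_neg by (simp add: derivable.R_neg)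
next
  case (L_neg S Gam a Del) then show ?case by (simp add: derivable.L_neg)
next
  case (D_K Ps b G S Pi Om)
  then have m: "Bot \<in># Om" by auto
  have "derivable (S + image_mset (\<lambda>(H, a). Box H a) Ps) Pi (add_mset (Box G b) (Om - {#Bot#}))"
    using D_K by (intro derivable.D_K) (auto dest: in_diffD)
  then show ?case using m by simp
next
  case (D_T G a S Gam Del) then show ?case by (simp add: derivable.D_T)
qed



lemma T_R: "derivable S G D \<Longrightarrow> Box K l \<in># D \<Longrightarrow>
   derivable S (G + image_mset body S) (add_mset l (D - {#Box K l#}))"
proof (induction rule: derivable.induct)
  case (init_atom S p Gam Del)
  then have m: "Box K l \<in># Del" by auto
  have "derivable S (add_mset (Atom p) (Gam + image_mset body S)) (add_mset (Atom p) (add_mset l (Del - {#Box K l#})))"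
    by (rule derivable.init_atom[OF init_atom.hyps])
  then show ?case using m by (simp add: add_mset_commute)
next
  case (init_bot S Gam Del) then show ?case by (simp add: derivable.init_bot)
next
  case (R_and S Gam a1 Del a2)
  then have m: "Box K l \<in># Del" by auto
  have "derivable S (Gam + image_mset body S) (add_mset a1 (add_mset l (Del - {#Box K l#})))"
       "derivable S (Gam + image_mset body S) (add_mset a2 (add_mset l (Del - {#Box K l#})))"
    using R_and m by (simp_all add: add_mset_commute)
  hence "derivable S (Gam + image_mset body S) (add_mset (And a1 a2) (add_mset l (Del - {#Box K l#})))"
    by (rule derivable.R_and)
  then show ?case using m by (simp add: add_mset_commute)
next
  case (L_and S a1 a2 Gam Del) then show ?case by (simp add: derivable.L_and)
next
  case (R_or S Gam a1 a2 Del)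
  then have m: "Box K l \<in># Del" by auto
  have "derivable S (Gam + image_mset body S) (add_mset a1 (add_mset a2 (add_mset l (Del - {#Box K l#}))))"
    using R_or m by (simp add: add_mset_commute)
  hence "derivable S (Gam + image_mset body S) (add_mset (Or a1 a2) (add_mset l (Del - {#Box K l#})))"
    by (rule derivable.R_or)
  then show ?case using m by (simp add: add_mset_commute)
next
  case (L_or S a1 Gam Del a2) then show ?case by (simp add: derivable.L_or)
next
  case (R_imp S a1 Gam a2 Del)
  then have m: "Box K l \<in># Del" by auto
  have "derivable S (add_mset a1 (Gam + image_mset body S)) (add_mset a2 (add_mset l (Del - {#Box K l#})))"
    using R_imp m by (simp add: add_mset_commute)
  hence "derivable S (Gam + image_mset body S) (add_mset (Imp a1 a2) (add_mset l (Del - {#Box K l#})))"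
    by (rule derivable.R_imp)
  then show ?case using m by (simp add: add_mset_commute)
next
  case (L_imp S Gam a1 Del a2)
  have "derivable S (Gam + image_mset body S) (add_mset a1 (add_mset l (Del - {#Box K l#})))"
    "derivable S (add_mset a2 (Gam + image_mset body S)) (add_mset l (Del - {#Box K l#}))"
    using L_imp by (simp_all add: add_mset_commute)
  hence "derivable S (add_mset (Imp a1 a2) (Gam + image_mset body S)) (add_mset l (Del - {#Box K l#}))"
    by (rule derivable.L_imp)
  then show ?case by simp
next
  case (R_neg S a Gam Del)
  then have m: "Box K l \<in># Del" by auto
  have "derivable S (add_mset a (Gam + image_mset body S)) (add_mset l (Del - {#Box K l#}))"
    using R_neg m by simp
  hence "derivable S (Gam + image_mset body S) (add_mset (Neg a) (add_mset l (Del - {#Box K l#})))"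
    by (rule derivable.R_neg)
  then show ?case using m by (simp add: add_mset_commute)
next
  case (L_neg S Gam a Del)
  have "derivable S (Gam + image_mset body S) (add_mset a (add_mset l (Del - {#Box K l#})))"
    using L_neg by (simp add: add_mset_commute)
  hence "derivable S (add_mset (Neg a) (Gam + image_mset body S)) (add_mset l (Del - {#Box K l#}))"
    by (rule derivable.L_neg)
  then show ?case by simp
next
  case (D_K Ps b G S Pi Om)
  let ?bx = "\<lambda>(H, a). Box H a"
  let ?S = "S + image_mset ?bx Ps"
  have bS: "boxed_ms ?S" using D_K.hyps(3) by (auto simp: boxed_ms_def)
  show ?case
  proof (cases "Box K l = Box G b")
    case True
    then have lb: "l = b" by simp
    have "derivable ({#} + ?S) (image_mset snd Ps + (Pi + image_mset body S)) ({#b#} + Om)"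
      using weak[OF bS D_K.hyps(1)] .
    then show ?thesis using True lb by (simp add: ac_simps)
  next
    case False
    then have m: "Box K l \<in># Om" using D_K.prems by auto
    have "derivable ?S Pi (add_mset (Box G b) (Om - {#Box K l#}))"
      using D_K by (intro derivable.D_K) (auto dest: in_diffD)
    from weak[OF _ this, of "{#}" "image_mset body ?S" "{#l#}"]
    have "derivable ?S (Pi + image_mset body ?S) (add_mset l (add_mset (Box G b) (Om - {#Box K l#})))"
      by (simp add: add_mset_commute)
    then show ?thesis using m by simp
  qed
next
  case (D_T G a S Gam Del)
  have "derivable (add_mset (Box G a) S) (add_mset a (add_mset a (Gam + image_mset body S))) (add_mset l (Del - {#Box K l#}))"
    using D_T by simp
  hence "derivable (add_mset (Box G a) S) (add_mset a (Gam + image_mset body S)) (add_mset l (Del - {#Box K l#}))"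
    by (rule contrL1)
  hence "derivable S (add_mset (Box G a) (Gam + image_mset body S)) (add_mset l (Del - {#Box K l#}))"
    by (rule derivable.D_T)
  then show ?case by simp
qed

lemma AC:
  assumes d1: "derivable {#} Gm (add_mset (Atom p) Dl)"
  shows "derivable S2 G2 D2 \<Longrightarrow> Atom p \<in># G2 \<Longrightarrow> derivable S2 (Gm + (G2 - {#Atom p#})) (Dl + D2)"
proof (induction rule: derivable.induct)
  case (init_atom S q Gam Del)
  show ?case
  proof (cases "q = p")
    case True
    have "derivable ({#} + S) (Gm + Gam) (add_mset (Atom p) Dl + Del)"
      using weak[OF init_atom.hyps d1] .
    then show ?thesis using True by simp
  next
    case False
    then have "Atom p \<in># Gam" using init_atom.prems by auto
    then show ?thesis using init_atom.hyps by (simp add: derivable.init_atom)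
  qed
next
  case (init_bot S Gam Del)
  then have "Atom p \<in># Gam" by auto
  then show ?case using init_bot.hyps by (simp add: derivable.init_bot)
next
  case (R_and S Gam a1 Del a2) then show ?case by (simp add: derivable.R_and)
next
  case (L_and S a1 a2 Gam Del)
  then have "Atom p \<in># Gam" by auto
  then show ?case using L_and by (simp add: derivable.L_and)
next
  case (R_or S Gam a1 a2 Del) then show ?case by (simp add: derivable.R_or)
next
  case (L_or S a1 Gam Del a2)
  then have "Atom p \<in># Gam" by auto
  then show ?case using L_or by (simp add: derivable.L_or)
next
  case (R_imp S a1 Gam a2 Del) then show ?case by (simp add: derivable.R_imp)
next
  case (L_imp S Gam a1 Del a2)
  then have "Atom p \<in># Gam" by auto
  then show ?case using L_imp by (simp add: derivable.L_imp)
next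
  case (R_neg S a Gam Del) then show ?case by (simp add: derivable.R_neg)
next
  case (L_neg S Gam a Del)
  then have "Atom p \<in># Gam" by auto
  then show ?case using L_neg by (simp add: derivable.L_neg)
next
  case (D_K Ps b G S Pi Om)
  let ?S = "S + image_mset (\<lambda>(H, a). Box H a) Ps"
  have "derivable ?S (Pi - {#Atom p#}) (add_mset (Box G b) Om)"
    using D_K by (intro derivable.D_K) (auto dest: in_diffD)
  from weak[OF _ this, of "{#}" Gm Dl]
  show ?case by (simp add: ac_simps)
next
  case (D_T G a S Gam Del)
  then have "Atom p \<in># Gam" by auto
  then show ?case using D_T by (simp add: derivable.D_T)
qed

lemma DK_gen:
  assumes d: "derivable {#} (image_mset snd R) {#b#}"
    and R: "\<forall>(K, a)\<in>set_mset R. K \<subseteq> H" and T: "boxed_ms T"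
  shows "derivable (T + image_mset (\<lambda>(H, a). Box H a) R) Gm (add_mset (Box H b) Dl)"
proof -
  let ?bx = "\<lambda>(H, a). Box H a"
  obtain PT where PT: "T = image_mset ?bx PT" using boxed_ex_image[OF T] by auto
  define P where "P = (\<lambda>(K::'a set, a::('a,'b) fm). K \<subseteq> H)"
  let ?T1 = "filter_mset P PT"
  let ?T2 = "filter_mset (\<lambda>x. \<not> P x) PT"
  have split: "PT = ?T1 + ?T2" by (rule multiset_partition)
  have "derivable {#} (image_mset snd R + image_mset snd ?T1) {#b#}" using weakL[OF d] .
  hence d': "derivable {#} (image_mset snd (R + ?T1)) {#b#}" by simp
  have "derivable (image_mset ?bx ?T2 + image_mset ?bx (R + ?T1)) {#} (add_mset (Box H b) {#})"
    using d' R by (intro derivable.D_K) (auto simp: P_def)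
  from weak[OF _ this, of "{#}" Gm Dl]
  have "derivable (image_mset ?bx ?T2 + image_mset ?bx (R + ?T1)) Gm (add_mset (Box H b) Dl)" by simp
  moreover have "image_mset ?bx ?T2 + image_mset ?bx (R + ?T1) = T + image_mset ?bx R"
    using PT split by (metis (no_types, lifting) image_mset_union union_commute union_assoc)
  ultimately show ?thesis by metis
qed



lemma K2:
  assumes cut1l: "\<And>Gm Dl Gm' Dl'. derivable {#} Gm (add_mset l Dl) \<Longrightarrow> derivable {#} (add_mset l Gm') Dl'
            \<Longrightarrow> derivable {#} (Gm + Gm') (Dl + Dl')"
    and hQ: "derivable {#} (add_mset l (image_mset snd Q)) {#b#}"
    and Q: "\<forall>(K, a)\<in>set_mset Q. K \<subseteq> H" and GH: "G \<subseteq> H" and S0: "boxed_ms S0"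
  shows "derivable S1 G1 D1 \<Longrightarrow> Box G l \<in># D1 \<Longrightarrow>
     derivable (S1 + S0 + image_mset (\<lambda>(H, a). Box H a) Q) G1 (add_mset (Box H b) (D1 - {#Box G l#}))"
proof (induction rule: derivable.induct)
  case (init_atom S p Gam Del)
  then have m: "Box G l \<in># Del" by auto
  have "derivable (S + S0 + image_mset (\<lambda>(H, a). Box H a) Q) (add_mset (Atom p) Gam) (add_mset (Atom p) (add_mset (Box H b) (Del - {#Box G l#})))"
    using init_atom.hyps S0 by (intro derivable.init_atom) simp
  then show ?case using m by (simp add: add_mset_commute)
next
  case (init_bot S Gam Del) then show ?case using S0 by (simp add: derivable.init_bot)
next
  case (R_and S Gam a1 Del a2)
  then have m: "Box G l \<in># Del" by auto
  have "derivable (S + S0 + image_mset (\<lambda>(H, a). Box H a) Q) Gam (add_mset a1 (add_mset (Box H b) (Del - {#Box G l#})))"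
       "derivable (S + S0 + image_mset (\<lambda>(H, a). Box H a) Q) Gam (add_mset a2 (add_mset (Box H b) (Del - {#Box G l#})))"
    using R_and m by (simp_all add: add_mset_commute)
  hence "derivable (S + S0 + image_mset (\<lambda>(H, a). Box H a) Q) Gam (add_mset (And a1 a2) (add_mset (Box H b) (Del - {#Box G l#})))"
    by (rule derivable.R_and)
  then show ?case using m by (simp add: add_mset_commute)
next
  case (L_and S a1 a2 Gam Del) then show ?case by (simp add: derivable.L_and)
next
  case (R_or S Gam a1 a2 Del)
  then have m: "Box G l \<in># Del" by auto
  have "derivable (S + S0 + image_mset (\<lambda>(H, a). Box H a) Q) Gam (add_mset a1 (add_mset a2 (add_mset (Box H b) (Del - {#Box G l#}))))"
    using R_or m by (simp add: add_mset_commute)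
  hence "derivable (S + S0 + image_mset (\<lambda>(H, a). Box H a) Q) Gam (add_mset (Or a1 a2) (add_mset (Box H b) (Del - {#Box G l#})))"
    by (rule derivable.R_or)
  then show ?case using m by (simp add: add_mset_commute)
next
  case (L_or S a1 Gam Del a2) then show ?case by (simp add: derivable.L_or)
next
  case (R_imp S a1 Gam a2 Del)
  then have m: "Box G l \<in># Del" by auto
  have "derivable (S + S0 + image_mset (\<lambda>(H, a). Box H a) Q) (add_mset a1 Gam) (add_mset a2 (add_mset (Box H b) (Del - {#Box G l#})))"
    using R_imp m by (simp add: add_mset_commute)
  hence "derivable (S + S0 + image_mset (\<lambda>(H, a). Box H a) Q) Gam (add_mset (Imp a1 a2) (add_mset (Box H b) (Del - {#Box G l#})))"
    by (rule derivable.R_imp)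
  then show ?case using m by (simp add: add_mset_commute)
next
  case (L_imp S Gam a1 Del a2)
  have "derivable (S + S0 + image_mset (\<lambda>(H, a). Box H a) Q) Gam (add_mset a1 (add_mset (Box H b) (Del - {#Box G l#})))"
    "derivable (S + S0 + image_mset (\<lambda>(H, a). Box H a) Q) (add_mset a2 Gam) (add_mset (Box H b) (Del - {#Box G l#}))"
    using L_imp by (simp_all add: add_mset_commute)
  thus ?case by (rule derivable.L_imp)
next
  case (R_neg S a Gam Del)
  then have m: "Box G l \<in># Del" by auto
  have "derivable (S + S0 + image_mset (\<lambda>(H, a). Box H a) Q) (add_mset a Gam) (add_mset (Box H b) (Del - {#Box G l#}))"
    using R_neg m by simp
  hence "derivable (S + S0 + image_mset (\<lambda>(H, a). Box H a) Q) Gam (add_mset (Neg a) (add_mset (Box H b) (Del - {#Box G l#})))"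
    by (rule derivable.R_neg)
  then show ?case using m by (simp add: add_mset_commute)
next
  case (L_neg S Gam a Del)
  have "derivable (S + S0 + image_mset (\<lambda>(H, a). Box H a) Q) Gam (add_mset a (add_mset (Box H b) (Del - {#Box G l#})))"
    using L_neg by (simp add: add_mset_commute)
  thus ?case by (rule derivable.L_neg)
next
  case (D_K Ps c K S Pi Om)
  let ?bx = "\<lambda>(H, a). Box H a"
  have bS: "boxed_ms S" using D_K.hyps(3) by (auto simp: boxed_ms_def)
  show ?case
  proof (cases "Box G l = Box K c")
    case True
    then have KG: "K = G" and lc: "l = c" by auto
    have "derivable {#} (image_mset snd Ps + image_mset snd Q) ({#} + {#b#})"
      using cut1l[of "image_mset snd Ps" "{#}" "image_mset snd Q" "{#b#}"] D_K.hyps(1) hQ lc by simp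
    hence dd: "derivable {#} (image_mset snd (Ps + Q)) {#b#}" by simp
    have P1: "\<forall>(K', a)\<in>set_mset Ps. K' \<subseteq> H"
    proof
      fix x assume x: "x \<in> set_mset Ps"
      obtain K' a where xe: "x = (K', a)" by (cases x)
      have "K' \<subseteq> K" using D_K.hyps(2) x xe by fastforce
      then show "case x of (K', a) \<Rightarrow> K' \<subseteq> H" using xe KG GH by auto
    qed
    have "\<forall>(K', a)\<in>set_mset (Ps + Q). K' \<subseteq> H" using P1 Q by auto
    with dd have "derivable ((S + S0) + image_mset ?bx (Ps + Q)) Pi (add_mset (Box H b) Om)"
      using bS S0 by (intro DK_gen) auto
    then show ?thesis using True by (simp add: ac_simps)
  next
    case False
    then have m: "Box G l \<in># Om" using D_K.prems by auto
    have "derivable (S + image_mset ?bx Ps) Pi (add_mset (Box K c) (Om - {#Box G l#}))"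
      using D_K by (intro derivable.D_K) (auto dest: in_diffD)
    from weak[OF _ this, of "S0 + image_mset ?bx Q" "{#}" "{#Box H b#}"]
    have "derivable (S + image_mset ?bx Ps + (S0 + image_mset ?bx Q)) Pi (add_mset (Box H b) (add_mset (Box K c) (Om - {#Box G l#})))"
      using S0 by (simp add: add_mset_commute)
    then show ?thesis using m False by (simp add: ac_simps)
  qed
next
  case (D_T K a S Gam Del)
  then show ?case by (simp add: derivable.D_T)
qed

lemma plus_minus_in: "x \<in># A \<Longrightarrow> A + B - {#x#} = A - {#x#} + B"
  by (simp add: multiset_eq_iff)

lemma Cut2:
  assumes cut1l: "\<And>Gm Dl Gm' Dl'. derivable {#} Gm (add_mset l Dl) \<Longrightarrow> derivable {#} (add_mset l Gm') Dl'
            \<Longrightarrow> derivable {#} (Gm + Gm') (Dl + Dl')"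
    and d1: "derivable Sig Gm (add_mset (Box G l) Dl)" and bSig: "boxed_ms Sig"
  shows "derivable S2 G2 D2 \<Longrightarrow> Box G l \<in># S2 \<Longrightarrow> derivable (S2 - {#Box G l#} + Sig) (Gm + G2) (Dl + D2)"
proof (induction rule: derivable.induct)
  case (init_atom S p Gam Del)
  then show ?case using bSig by (simp add: derivable.init_atom boxed_ms_diff)
next
  case (init_bot S Gam Del)
  then show ?case using bSig by (simp add: derivable.init_bot boxed_ms_diff)
next
  case (R_and S Gam a1 Del a2) then show ?case by (simp add: derivable.R_and)
next
  case (L_and S a1 a2 Gam Del) then show ?case by (simp add: derivable.L_and)
next
  case (R_or S Gam a1 a2 Del) then show ?case by (simp add: derivable.R_or)
next
  case (L_or S a1 Gam Del a2) then show ?case by (simp add: derivable.L_or)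
next
  case (R_imp S a1 Gam a2 Del) then show ?case by (simp add: derivable.R_imp)
next
  case (L_imp S Gam a1 Del a2) then show ?case by (simp add: derivable.L_imp)
next
  case (R_neg S a Gam Del) then show ?case by (simp add: derivable.R_neg)
next
  case (L_neg S Gam a Del) then show ?case by (simp add: derivable.L_neg)
next
  case (D_K Ps b H S Pi Om)
  let ?bx = "\<lambda>(H, a). Box H a"
  have bS: "boxed_ms S" using D_K.hyps(3) by (auto simp: boxed_ms_def)
  show ?case
  proof (cases "G \<subseteq> H")
    case True
    then have nS: "Box G l \<notin># S" using D_K.hyps(3) by auto
    hence "Box G l \<in># image_mset ?bx Ps" using D_K.prems by auto
    hence "(G, l) \<in># Ps" by (metis box_image_mem)
    then obtain Ps0 where Ps: "Ps = add_mset (G, l) Ps0" by (metis multi_member_split)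
    have hQ: "derivable {#} (add_mset l (image_mset snd Ps0)) {#b#}" using D_K.hyps(1) Ps by simp
    have Q: "\<forall>(K, a)\<in>set_mset Ps0. K \<subseteq> H" using D_K.hyps(2) Ps by auto
    have "derivable (Sig + S + image_mset ?bx Ps0) Gm (add_mset (Box H b) (add_mset (Box G l) Dl - {#Box G l#}))"
      using K2[OF cut1l hQ Q True bS d1] by simp
    hence "derivable (Sig + S + image_mset ?bx Ps0) Gm (add_mset (Box H b) Dl)" by simp
    from weak[OF _ this, of "{#}" Pi Om]
    have "derivable (Sig + S + image_mset ?bx Ps0) (Gm + Pi) (add_mset (Box H b) Dl + Om)" by simp
    then show ?thesis using Ps by (simp add: ac_simps)
  next
    case False
    then have "(G, l) \<notin># Ps" using D_K.hyps(2) by auto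
    hence nP: "Box G l \<notin># image_mset ?bx Ps" by (metis box_image_mem)
    hence mS: "Box G l \<in># S" using D_K.prems by auto
    have "derivable ((S - {#Box G l#}) + image_mset ?bx Ps) Pi (add_mset (Box H b) Om)"
      using D_K by (intro derivable.D_K) (auto dest: in_diffD)
    from weak[OF bSig this, of Gm Dl]
    have "derivable ((S - {#Box G l#}) + image_mset ?bx Ps + Sig) (Pi + Gm) (add_mset (Box H b) Om + Dl)" .
    then show ?thesis using plus_minus_in[OF mS, of "image_mset ?bx Ps"] by (simp add: ac_simps)
  qed
next
  case (D_T K a S Gam Del)
  then have "Box G l \<in># S" by auto
  then show ?case using D_T by (simp add: derivable.D_T)
qed



lemma contr2: "derivable S (Gm + (Gm + Gm')) (Dl + (Dl + Dl')) \<Longrightarrow> derivable S (Gm + Gm') (Dl + Dl')"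
proof -
  assume "derivable S (Gm + (Gm + Gm')) (Dl + (Dl + Dl'))"
  hence "derivable S (Gm + Gm + Gm') (Dl + Dl + Dl')" by (simp add: add.assoc)
  hence "derivable S (Gm + Gm') (Dl + Dl + Dl')" by (rule contrL)
  thus ?thesis by (rule contrR)
qed

lemma cut1: "derivable {#} Gm (add_mset l Dl) \<Longrightarrow> derivable {#} (add_mset l Gm') Dl' \<Longrightarrow>
  derivable {#} (Gm + Gm') (Dl + Dl')"
proof (induction l arbitrary: Gm Dl Gm' Dl')
  case (Atom p)
  show ?case using AC[OF Atom(1) Atom(2)] by simp
next
  case Bot
  have "derivable {#} Gm Dl" using BR[OF Bot(1)] by simp
  from weak[OF _ this, of "{#}" Gm' Dl'] show ?case by simp
next
  case (And a b)
  have 1: "derivable {#} Gm (add_mset a Dl)" using inv_R_and1[OF And(3)] .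
  have 2: "derivable {#} Gm (add_mset b Dl)" using inv_R_and2[OF And(3)] .
  have 3: "derivable {#} (add_mset a (add_mset b Gm')) Dl'" using inv_L_and[OF And(4)] .
  have "derivable {#} (Gm + add_mset b Gm') (Dl + Dl')" using And(1)[OF 1 3] .
  hence "derivable {#} (add_mset b (Gm + Gm')) (Dl + Dl')" by simp
  hence "derivable {#} (Gm + (Gm + Gm')) (Dl + (Dl + Dl'))" using And(2)[OF 2] by blast
  thus ?case by (rule contr2)
next
  case (Or a b)
  have 1: "derivable {#} Gm (add_mset a (add_mset b Dl))" using inv_R_or[OF Or(3)] .
  have 2: "derivable {#} (add_mset a Gm') Dl'" using inv_L_or1[OF Or(4)] .
  have 3: "derivable {#} (add_mset b Gm') Dl'" using inv_L_or2[OF Or(4)] .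
  have "derivable {#} (Gm + Gm') (add_mset b Dl + Dl')" using Or(1)[OF 1 2] .
  hence "derivable {#} (Gm + Gm') (add_mset b (Dl + Dl'))" by simp
  hence "derivable {#} ((Gm + Gm') + Gm') ((Dl + Dl') + Dl')" using Or(2)[OF _ 3] by blast
  hence "derivable {#} (Gm' + (Gm' + Gm)) (Dl' + (Dl' + Dl))" by (simp add: ac_simps)
  hence "derivable {#} (Gm' + Gm) (Dl' + Dl)" by (rule contr2)
  thus ?case by (simp add: ac_simps)
next
  case (Imp a b)
  have 1: "derivable {#} (add_mset a Gm) (add_mset b Dl)" using inv_R_imp[OF Imp(3)] .
  have 2: "derivable {#} Gm' (add_mset a Dl')" using inv_L_imp1[OF Imp(4)] .
  have 3: "derivable {#} (add_mset b Gm') Dl'" using inv_L_imp2[OF Imp(4)] .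
  have "derivable {#} (Gm' + Gm) (Dl' + add_mset b Dl)" using Imp(1)[OF 2 1] .
  hence "derivable {#} (Gm' + Gm) (add_mset b (Dl' + Dl))" by simp
  hence "derivable {#} ((Gm' + Gm) + Gm') ((Dl' + Dl) + Dl')" using Imp(2)[OF _ 3] by blast
  hence "derivable {#} (Gm' + (Gm' + Gm)) (Dl' + (Dl' + Dl))" by (simp add: ac_simps)
  hence "derivable {#} (Gm' + Gm) (Dl' + Dl)" by (rule contr2)
  thus ?case by (simp add: ac_simps)
next
  case (Neg a)
  have 1: "derivable {#} (add_mset a Gm) Dl" using inv_R_neg[OF Neg(2)] .
  have 2: "derivable {#} Gm' (add_mset a Dl')" using inv_L_neg[OF Neg(3)] .
  have "derivable {#} (Gm' + Gm) (Dl' + Dl)" using Neg(1)[OF 2 1] .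
  thus ?case by (simp add: ac_simps)
next
  case (Box G c)
  have 1: "derivable {#Box G c#} (add_mset c Gm') Dl'" using inv_L_box[OF Box(3)] by simp
  have "derivable ({#Box G c#} - {#Box G c#} + {#}) (Gm + add_mset c Gm') (Dl + Dl')"
    using Cut2[OF Box(1) Box(2) _ 1] by simp
  hence 2: "derivable {#} (add_mset c (Gm + Gm')) (Dl + Dl')" by simp
  have "derivable {#} (Gm + image_mset body {#}) (add_mset c (add_mset (Box G c) Dl - {#Box G c#}))"
    using T_R[OF Box(2), of G c] by simp
  hence 3: "derivable {#} Gm (add_mset c Dl)" by simp
  have "derivable {#} (Gm + (Gm + Gm')) (Dl + (Dl + Dl'))" using Box(1)[OF 3 2] .
  thus ?case by (rule contr2)
qed

theorem proposition6p12:
  fixes dummy :: "('a::finite, 'p::countable) fm"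
  shows "(\<forall>(Gam :: ('a, 'p) fm multiset) Del Gam' Del' l.
            wf_ms Gam \<and> wf_ms Del \<and> wf_ms Gam' \<and> wf_ms Del' \<and> wf l \<and>
            derivable {#} Gam (add_mset l Del) \<and> derivable {#} (add_mset l Gam') Del'
            \<longrightarrow> derivable {#} (Gam + Gam') (Del + Del'))
       \<and> (\<forall>(Sig :: ('a, 'p) fm multiset) Sig' Gam Del Gam' Del' G l.
            boxed_ms Sig \<and> boxed_ms Sig' \<and> wf_ms Sig \<and> wf_ms Sig' \<and>
            wf_ms Gam \<and> wf_ms Del \<and> wf_ms Gam' \<and> wf_ms Del' \<and> G \<noteq> {} \<and> wf l \<and>
            derivable Sig Gam (add_mset (Box G l) Del) \<and>
            derivable (add_mset (Box G l) Sig') Gam' Del'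
            \<longrightarrow> derivable (Sig' + Sig) (Gam + Gam') (Del + Del'))"
proof (intro conjI allI impI)
  fix Gam Del Gam' Del' :: "('a, 'p) fm multiset" and l :: "('a, 'p) fm"
  assume "wf_ms Gam \<and> wf_ms Del \<and> wf_ms Gam' \<and> wf_ms Del' \<and> wf l \<and>
            derivable {#} Gam (add_mset l Del) \<and> derivable {#} (add_mset l Gam') Del'"
  then show "derivable {#} (Gam + Gam') (Del + Del')" using cut1 by blast
next
  fix Sig Sig' Gam Del Gam' Del' :: "('a, 'p) fm multiset" and G and l :: "('a, 'p) fm"
  assume h: "boxed_ms Sig \<and> boxed_ms Sig' \<and> wf_ms Sig \<and> wf_ms Sig' \<and>
            wf_ms Gam \<and> wf_ms Del \<and> wf_ms Gam' \<and> wf_ms Del' \<and> G \<noteq> {} \<and> wf l \<and>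
            derivable Sig Gam (add_mset (Box G l) Del) \<and>
            derivable (add_mset (Box G l) Sig') Gam' Del'"
  have "derivable (add_mset (Box G l) Sig' - {#Box G l#} + Sig) (Gam + Gam') (Del + Del')"
    using h by (intro Cut2[where l=l and G=G]) (auto intro: cut1)
  then show "derivable (Sig' + Sig) (Gam + Gam') (Del + Del')" by simp
qed

end
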